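(* Let $\mathrm{Prime}\colon\mathbb{N}\to P(\mathbb{N})$, $\mathrm{Prime}(n)=\{p\mid p \text{ prime},\ \exists k\in\mathbb{N}\colon n=k\cdot p\}$. Then $\mathrm{Wall}_{\aleph_0}(\mathrm{Prime},\mathbb{N})$ equals the family of all $U\subset\mathbb{N}$ such that the set of natural numbers having a prime divisor not in $U$ is finite, and $\mathrm{Wall}_{\aleph_0}(\mathrm{Prime},\mathbb{N})$ is a proper filter on $\mathbb{N}$ but not an ultrafilter.
   Context: $\mathbb{N}=\{0,1,2,\dots\}$. For a multifunction $F\colon X\to P(X)$ and $B\subset X$, $F_{+}(B)=\{x\in X\mid F(x)\subset B\}$, and $\mathrm{Wall}_{\aleph_0}(F,X)=\{U\subset X\mid |X\setminus F_{+}(U)|<\aleph_0\}$. A filter on $X$ is a nonempty family $\Phi\subset P(X)$ with $A,B\in\Phi\iff A\cap B\in\Phi$; it is proper if $\emptyset\notin\Phi$; an ultrafilter is a proper filter such that for every $U\subset X$, $U\in\Phi$ or $X\setminus U\in\Phi$. *)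

theory Defs
  imports "HOL-Computational_Algebra.Primes"
begin

definition Prime_mf :: "nat \<Rightarrow> nat set" where
  "Prime_mf n = {p. prime p \<and> (\<exists>k. n = k * p)}"

definition upper_inv :: "'a set \<Rightarrow> ('a \<Rightarrow> 'a set) \<Rightarrow> 'a set \<Rightarrow> 'a set" where
  "upper_inv X F B = {x \<in> X. F x \<subseteq> B}"

definition Wall_aleph0 :: "('a \<Rightarrow> 'a set) \<Rightarrow> 'a set \<Rightarrow> 'a set set" where
  "Wall_aleph0 F X = {U. U \<subseteq> X \<and> finite (X - upper_inv X F U)}"

definition is_filter_on :: "'a set \<Rightarrow> 'a set set \<Rightarrow> bool" where
  "is_filter_on X \<Phi> \<longleftrightarrow> \<Phi> \<noteq> {} \<and> \<Phi> \<subseteq> Pow X \<and>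
     (\<forall>A \<in> Pow X. \<forall>B \<in> Pow X. (A \<in> \<Phi> \<and> B \<in> \<Phi>) \<longleftrightarrow> A \<inter> B \<in> \<Phi>)"

definition is_proper_filter_on :: "'a set \<Rightarrow> 'a set set \<Rightarrow> bool" where
  "is_proper_filter_on X \<Phi> \<longleftrightarrow> is_filter_on X \<Phi> \<and> {} \<notin> \<Phi>"

definition is_ultrafilter_on :: "'a set \<Rightarrow> 'a set set \<Rightarrow> bool" where
  "is_ultrafilter_on X \<Phi> \<longleftrightarrow> is_proper_filter_on X \<Phi> \<and>
     (\<forall>U \<in> Pow X. U \<in> \<Phi> \<or> X - U \<in> \<Phi>)"

end

theory Submission
  imports Defs
begin

lemma S_eq: "{n::nat. \<exists>p. prime p \<and> p dvd n \<and> p \<notin> U} = UNIV - upper_inv UNIV Prime_mf U"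
  unfolding upper_inv_def Prime_mf_def by (auto simp: dvd_def mult.commute)

lemma char: "finite {n::nat. \<exists>p. prime p \<and> p dvd n \<and> p \<notin> U} \<longleftrightarrow> {p. prime p} \<subseteq> U"
proof
  assume f: "finite {n::nat. \<exists>p. prime p \<and> p dvd n \<and> p \<notin> U}"
  show "{p. prime p} \<subseteq> U"
  proof
    fix p :: nat assume "p \<in> {p. prime p}"
    hence pr: "prime p" by simp
    show "p \<in> U"
    proof (rule ccontr)
      assume "p \<notin> U"
      hence "range (\<lambda>k. k * p) \<subseteq> {n::nat. \<exists>p. prime p \<and> p dvd n \<and> p \<notin> U}"
        using pr by auto
      moreover have "inj (\<lambda>k. k * p)" using pr
        by (auto simp: inj_def prime_gt_0_nat)
      hence "infinite (range (\<lambda>k::nat. k * p))"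
        using finite_imageD by blast
      ultimately show False using f finite_subset by blast
    qed
  qed
next
  assume "{p. prime p} \<subseteq> U"
  hence "{n::nat. \<exists>p. prime p \<and> p dvd n \<and> p \<notin> U} = {}" by blast
  thus "finite {n::nat. \<exists>p. prime p \<and> p dvd n \<and> p \<notin> U}" by (metis finite.emptyI)
qed

lemma W_eq: "Wall_aleph0 Prime_mf UNIV = {U. {p::nat. prime p} \<subseteq> U}"
  unfolding Wall_aleph0_def using char S_eq by auto

theorem lemma6p16:
  shows "Wall_aleph0 Prime_mf UNIV =
           {U. finite {n::nat. \<exists>p. prime p \<and> p dvd n \<and> p \<notin> U}}
         \<and> is_proper_filter_on UNIV (Wall_aleph0 Prime_mf UNIV)
         \<and> \<not> is_ultrafilter_on UNIV (Wall_aleph0 Prime_mf UNIV)"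
proof (intro conjI)
  show "Wall_aleph0 Prime_mf UNIV =
           {U. finite {n::nat. \<exists>p. prime p \<and> p dvd n \<and> p \<notin> U}}"
    unfolding W_eq using char by auto
  have two: "prime (2::nat)" by simp
  have three: "prime (3::nat)" by simp
  show "is_proper_filter_on UNIV (Wall_aleph0 Prime_mf UNIV)"
    unfolding W_eq is_proper_filter_on_def is_filter_on_def using two by auto
  show "\<not> is_ultrafilter_on UNIV (Wall_aleph0 Prime_mf UNIV)"
  proof
    assume "is_ultrafilter_on UNIV (Wall_aleph0 Prime_mf UNIV)"
    hence "{2::nat} \<in> Wall_aleph0 Prime_mf UNIV \<or> UNIV - {2::nat} \<in> Wall_aleph0 Prime_mf UNIV"
      unfolding is_ultrafilter_on_def by blast
    moreover have "(3::nat) \<notin> {2}" "(2::nat) \<notin> UNIV - {2}" by auto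
    ultimately show False unfolding W_eq using two three by blast
  qed
qed

end
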